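(* Let $\mathcal R$ be a CCTRS, let $\rho\colon \ell\to r\Leftarrow c$ be a rule of $\mathcal R$, and let $s$ be an instance of $\ell$. Suppose $s\to_{\mathcal R}^* t$ using only steps at non-root positions, and suppose $t\to_{\mathcal R} u$ by a step with rule $\rho$ at the root position. Then there exists a term $v$ such that $s\to_{\mathcal R} v$ by a step with rule $\rho$ at the root position and $v\to_{\mathcal R}^* u$.
   Context: Terms are built from a signature $\mathcal F$ and variables $\mathcal V$. An (oriented) conditional rewrite rule has the form $\ell\to r\Leftarrow a_1\approx b_1,\dots,a_k\approx b_k$ with $k\ge 0$. For a set $\mathcal R$ of such rules, $\to_{\mathcal R}=\bigcup_{i}\to_{\mathcal R_i}$ where $\mathcal R_0=\emptyset$ and $\mathcal R_{i+1}=\{\ell\sigma\to r\sigma\mid (\ell\to r\Leftarrow c)\in\mathcal R,\ a_j\sigma\to^*_{\mathcal R_i}b_j\sigma \text{ for all } j\}$; equivalently $s\to t$ iff there are a position $p$, a rule and a substitution $\sigma$ with $s|_p=\ell\sigma$, $t=s[r\sigma]_p$ and $a_j\sigma\to^*b_j\sigma$ for all $j$ (written $\mathcal R\vdash c\sigma$). Defined symbols are the root symbols of left-hand sides; all other symbols are constructors; constructor terms contain only constructors and variables. A CCTRS is such a system in which every rule has the form $f(\ell_1,\dots,\ell_n)\to r\Leftarrow a_1\approx b_1,\dots,a_k\approx b_k$ where $\ell_1,\dots,\ell_n,b_1,\dots,b_k$ are constructor terms, the terms $f(\ell_1,\dots,\ell_n),b_1,\dots,b_k$ pairwise have no common variables,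 $\mathrm{Var}(r)\subseteq\mathrm{Var}(\ell_1,\dots,\ell_n,b_1,\dots,b_k)$, and $\mathrm{Var}(a_i)\subseteq\mathrm{Var}(\ell_1,\dots,\ell_n,b_1,\dots,b_{i-1})$ for all $1\le i\le k$. *)

theory Defs
  imports Main
begin

datatype ('f, 'v) "term" = Var 'v | Fun 'f "('f, 'v) term list"

fun subst :: "('f, 'v) term \<Rightarrow> ('v \<Rightarrow> ('f, 'v) term) \<Rightarrow> ('f, 'v) term" (infixl "\<cdot>" 67) where
  "Var x \<cdot> \<sigma> = \<sigma> x"
| "Fun f ts \<cdot> \<sigma> = Fun f (map (\<lambda>t. t \<cdot> \<sigma>) ts)"

fun vars_term :: "('f, 'v) term \<Rightarrow> 'v set" where
  "vars_term (Var x) = {x}"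
| "vars_term (Fun f ts) = (\<Union>t\<in>set ts. vars_term t)"

fun funas_term :: "('f, 'v) term \<Rightarrow> ('f \<times> nat) set" where
  "funas_term (Var x) = {}"
| "funas_term (Fun f ts) = insert (f, length ts) (\<Union>t\<in>set ts. funas_term t)"

text \<open>A rule  l -> r <= a1 ~ b1, ..., ak ~ bk  is a triple (l, r, [(a1,b1),...,(ak,bk)]).\<close>
type_synonym ('f, 'v) crule = "('f, 'v) term \<times> ('f, 'v) term \<times> (('f, 'v) term \<times> ('f, 'v) term) list"

definition lhs :: "('f, 'v) crule \<Rightarrow> ('f, 'v) term" where "lhs \<rho> = fst \<rho>"
definition rhs :: "('f, 'v) crule \<Rightarrow> ('f, 'v) term" where "rhs \<rho> = fst (snd \<rho>)"
definition conds :: "('f, 'v) crule \<Rightarrow> (('f, 'v) term \<times> ('f, 'v) term) list" where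
  "conds \<rho> = snd (snd \<rho>)"

text \<open>The rewrite relation of an oriented CTRS: the least relation closed under
  root steps whose instantiated conditions are joinable by reachability, and under contexts.
  (This least fixed point coincides with the union of the levels R_i.)\<close>
inductive rstep :: "('f, 'v) crule set \<Rightarrow> ('f, 'v) term \<Rightarrow> ('f, 'v) term \<Rightarrow> bool"
  for R :: "('f, 'v) crule set" where
  root: "\<rho> \<in> R \<Longrightarrow> (\<forall>(a, b) \<in> set (conds \<rho>). (rstep R)\<^sup>*\<^sup>* (a \<cdot> \<sigma>) (b \<cdot> \<sigma>))
     \<Longrightarrow> rstep R (lhs \<rho> \<cdot> \<sigma>) (rhs \<rho> \<cdot> \<sigma>)"
| ctxt: "rstep R s t \<Longrightarrow> rstep R (Fun f (ss1 @ s # ss2)) (Fun f (ss1 @ t # ss2))"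

definition root_step :: "('f, 'v) crule set \<Rightarrow> ('f, 'v) crule \<Rightarrow> ('f, 'v) term \<Rightarrow> ('f, 'v) term \<Rightarrow> bool" where
  "root_step R \<rho> s t \<longleftrightarrow> \<rho> \<in> R \<and> (\<exists>\<sigma>. s = lhs \<rho> \<cdot> \<sigma> \<and> t = rhs \<rho> \<cdot> \<sigma> \<and>
      (\<forall>(a, b) \<in> set (conds \<rho>). (rstep R)\<^sup>*\<^sup>* (a \<cdot> \<sigma>) (b \<cdot> \<sigma>)))"

definition nonroot_step :: "('f, 'v) crule set \<Rightarrow> ('f, 'v) term \<Rightarrow> ('f, 'v) term \<Rightarrow> bool" where
  "nonroot_step R s t \<longleftrightarrow> (\<exists>f ss1 ss2 s' t'. rstep R s' t' \<and>
      s = Fun f (ss1 @ s' # ss2) \<and> t = Fun f (ss1 @ t' # ss2))"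

definition defined_syms :: "('f, 'v) crule set \<Rightarrow> ('f \<times> nat) set" where
  "defined_syms R = {(f, length ts) | f ts \<rho>. \<rho> \<in> R \<and> lhs \<rho> = Fun f ts}"

definition constructor_term :: "('f, 'v) crule set \<Rightarrow> ('f, 'v) term \<Rightarrow> bool" where
  "constructor_term R t \<longleftrightarrow> funas_term t \<inter> defined_syms R = {}"

definition cctrs_rule :: "('f, 'v) crule set \<Rightarrow> ('f, 'v) crule \<Rightarrow> bool" where
  "cctrs_rule R \<rho> \<longleftrightarrow> (let l = lhs \<rho>; r = rhs \<rho>; cs = conds \<rho>; k = length cs in
     (\<exists>f ls. l = Fun f ls \<and>
        (\<forall>li \<in> set ls. constructor_term R li) \<and>
        (\<forall>i < k. constructor_term R (snd (cs ! i))) \<and>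
        (\<forall>i < k. vars_term l \<inter> vars_term (snd (cs ! i)) = {}) \<and>
        (\<forall>i < k. \<forall>j < k. i \<noteq> j \<longrightarrow> vars_term (snd (cs ! i)) \<inter> vars_term (snd (cs ! j)) = {}) \<and>
        vars_term r \<subseteq> vars_term l \<union> (\<Union>i<k. vars_term (snd (cs ! i))) \<and>
        (\<forall>i < k. vars_term (fst (cs ! i)) \<subseteq> vars_term l \<union> (\<Union>j<i. vars_term (snd (cs ! j))))))"

definition cctrs :: "('f, 'v) crule set \<Rightarrow> bool" where
  "cctrs R \<longleftrightarrow> (\<forall>\<rho> \<in> R. cctrs_rule R \<rho>)"

end

theory Submission
  imports Defs
begin

inductive argrel :: "('f, 'v) crule set \<Rightarrow> ('f, 'v) term \<Rightarrow> ('f, 'v) term \<Rightarrow> ('f, 'v) term \<Rightarrow> bool"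
  for R where
  var: "(rstep R)\<^sup>*\<^sup>* s t \<Longrightarrow> argrel R (Var x) s t"
| fn: "length ss = length cs \<Longrightarrow> length ts = length cs \<Longrightarrow>
      (\<forall>i<length cs. argrel R (cs!i) (ss!i) (ts!i)) \<Longrightarrow> argrel R (Fun g cs) (Fun g ss) (Fun g ts)"

lemma argrel_refl: "argrel R c (c \<cdot> \<sigma>) (c \<cdot> \<sigma>)"
proof (induction c)
  case (Var x) then show ?case by (auto intro: argrel.var)
next
  case (Fun g cs) then show ?case by (auto intro!: argrel.fn)
qed

lemma argrel_vars: "argrel R c (c \<cdot> \<sigma>) (c \<cdot> \<tau>) \<Longrightarrow> x \<in> vars_term c \<Longrightarrow> (rstep R)\<^sup>*\<^sup>* (\<sigma> x) (\<tau> x)"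
proof (induction c)
  case (Var y) then show ?case by (auto elim: argrel.cases)
next
  case (Fun g cs)
  then obtain c where c: "c \<in> set cs" "x \<in> vars_term c" by auto
  then obtain i where i: "i < length cs" "cs ! i = c" by (auto simp: in_set_conv_nth)
  from Fun.prems(1) have "argrel R (cs!i) (map (\<lambda>t. t \<cdot> \<sigma>) cs ! i) (map (\<lambda>t. t \<cdot> \<tau>) cs ! i)"
    using i by (auto elim: argrel.cases)
  then have "argrel R c (c \<cdot> \<sigma>) (c \<cdot> \<tau>)" using i by simp
  then show ?case using Fun.IH c by auto
qed

lemma argrel_step:
  assumes "cctrs R"
  shows "argrel R c s t \<Longrightarrow> funas_term c \<inter> defined_syms R = {} \<Longrightarrow> rstep R t t' \<Longrightarrow> argrel R c s t'"
proof (induction c arbitrary: s t t')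
  case (Var x) then show ?case by (auto elim!: argrel.cases intro!: argrel.var)
next
  case (Fun g cs)
  from Fun.prems(1) obtain ss ts where st: "s = Fun g ss" "t = Fun g ts" "length ss = length cs"
    "length ts = length cs" "\<forall>i<length cs. argrel R (cs!i) (ss!i) (ts!i)"
    by (auto elim: argrel.cases)
  have nd: "(g, length cs) \<notin> defined_syms R" using Fun.prems(2) by auto
  from Fun.prems(3) st(2) show ?case
  proof (cases rule: rstep.cases)
    case (root \<rho> \<sigma>)
    from assms root(3) obtain f ls where "lhs \<rho> = Fun f ls"
      unfolding cctrs_def cctrs_rule_def Let_def by blast
    with root(1) have "g = f" "length ls = length ts" using st(2) by auto
    then have "(g, length cs) \<in> defined_syms R" unfolding defined_syms_def
      using root(3) \<open>lhs \<rho> = Fun f ls\<close> st(4) by (metis (mono_tags, lifting) mem_Collect_eq)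
    with nd show ?thesis by simp
  next
    case (ctxt s0 t0 f ss1 ss2)
    have gf: "g = f" and ts: "ts = ss1 @ s0 # ss2" using ctxt(1) st(2) by auto
    define k where "k = length ss1"
    have k: "k < length cs" using st(4) ts k_def by simp
    have tsk: "ts ! k = s0" using ts k_def by simp
    have ck: "cs ! k \<in> set cs" using k by simp
    have "funas_term (cs!k) \<inter> defined_syms R = {}" using Fun.prems(2) ck by auto
    then have new: "argrel R (cs!k) (ss!k) t0"
      using Fun.IH[OF ck st(5)[rule_format, OF k]] tsk ctxt(3) by auto
    have "\<forall>i<length cs. argrel R (cs!i) (ss!i) ((ss1 @ t0 # ss2)!i)"
    proof (intro allI impI)
      fix i assume i: "i < length cs"
      show "argrel R (cs!i) (ss!i) ((ss1 @ t0 # ss2)!i)"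
      proof (cases "i = k")
        case True then show ?thesis using new k_def by simp
      next
        case False
        have "(ss1 @ t0 # ss2)!i = ts ! i" using False ts k_def
          by (cases "i < length ss1") (auto simp: nth_append nth_Cons split: nat.splits)
        then show ?thesis using st(5) i by simp
      qed
    qed
    then show ?thesis using st ctxt(2) gf ts by (auto intro!: argrel.fn)
  qed
qed

lemma subst_cong: "(\<forall>x\<in>vars_term t. \<sigma> x = \<tau> x) \<Longrightarrow> t \<cdot> \<sigma> = t \<cdot> \<tau>"
  by (induction t) auto

lemma rsteps_ctxt: "(rstep R)\<^sup>*\<^sup>* a b \<Longrightarrow> (rstep R)\<^sup>*\<^sup>* (Fun f (xs @ a # ys)) (Fun f (xs @ b # ys))"
proof (induction rule: rtranclp_induct)
  case base then show ?case by simp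
next
  case (step y z) then show ?case by (metis rstep.ctxt rtranclp.rtrancl_into_rtrancl)
qed

lemma rsteps_args: "length as = length bs \<Longrightarrow> (\<forall>i<length as. (rstep R)\<^sup>*\<^sup>* (as!i) (bs!i)) \<Longrightarrow>
  (rstep R)\<^sup>*\<^sup>* (Fun f (pre @ as)) (Fun f (pre @ bs))"
proof (induction as bs arbitrary: pre rule: list_induct2)
  case Nil then show ?case by simp
next
  case (Cons a as b bs)
  have 1: "(rstep R)\<^sup>*\<^sup>* (Fun f (pre @ a # as)) (Fun f (pre @ b # as))"
    using Cons.prems by (intro rsteps_ctxt) auto
  have 2: "(rstep R)\<^sup>*\<^sup>* (Fun f ((pre @ [b]) @ as)) (Fun f ((pre @ [b]) @ bs))"
    using Cons.prems by (intro Cons.IH) auto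
  from 1 2 show ?case by simp
qed

lemma rsteps_subst: "(\<forall>x\<in>vars_term t. (rstep R)\<^sup>*\<^sup>* (\<sigma> x) (\<tau> x)) \<Longrightarrow> (rstep R)\<^sup>*\<^sup>* (t \<cdot> \<sigma>) (t \<cdot> \<tau>)"
proof (induction t)
  case (Var x) then show ?case by simp
next
  case (Fun f ts)
  have "(rstep R)\<^sup>*\<^sup>* (Fun f ([] @ map (\<lambda>t. t \<cdot> \<sigma>) ts)) (Fun f ([] @ map (\<lambda>t. t \<cdot> \<tau>) ts))"
    using Fun by (intro rsteps_args) auto
  then show ?case by simp
qed

theorem lemma3p1:
  fixes R :: "('f, 'v) crule set" and \<rho> :: "('f, 'v) crule"
    and s t u :: "('f, 'v) term" and \<sigma> :: "'v \<Rightarrow> ('f, 'v) term"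
  assumes "cctrs R"
    and "\<rho> \<in> R"
    and "s = lhs \<rho> \<cdot> \<sigma>"
    and "(nonroot_step R)\<^sup>*\<^sup>* s t"
    and "root_step R \<rho> t u"
  shows "\<exists>v. root_step R \<rho> s v \<and> (rstep R)\<^sup>*\<^sup>* v u"
proof -
  have cr: "cctrs_rule R \<rho>" using assms(1,2) unfolding cctrs_def by blast
  then obtain f ls where l: "lhs \<rho> = Fun f ls" and lsc: "\<forall>li\<in>set ls. constructor_term R li"
    and dis: "\<forall>i<length (conds \<rho>). vars_term (lhs \<rho>) \<inter> vars_term (snd (conds \<rho> ! i)) = {}"
    unfolding cctrs_rule_def Let_def by blast
  from assms(5) obtain \<tau> where t: "t = lhs \<rho> \<cdot> \<tau>" and u: "u = rhs \<rho> \<cdot> \<tau>"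
    and cd: "\<forall>(a, b) \<in> set (conds \<rho>). (rstep R)\<^sup>*\<^sup>* (a \<cdot> \<tau>) (b \<cdot> \<tau>)"
    unfolding root_step_def by blast
  have "argrel R (lhs \<rho>) s t" using assms(4)
  proof (induction rule: rtranclp_induct)
    case base then show ?case using assms(3) argrel_refl by simp
  next
    case (step y z)
    from step.IH obtain ss ts where st: "s = Fun f ss" "y = Fun f ts" "length ss = length ls"
      "length ts = length ls" "\<forall>i<length ls. argrel R (ls!i) (ss!i) (ts!i)"
      unfolding l by (auto elim: argrel.cases)
    from step.hyps(2) obtain g ss1 ss2 s0 t0 where ns: "rstep R s0 t0"
      "y = Fun g (ss1 @ s0 # ss2)" "z = Fun g (ss1 @ t0 # ss2)"
      unfolding nonroot_step_def by blast
    have gf: "g = f" and ts: "ts = ss1 @ s0 # ss2" using ns st by auto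
    define k where "k = length ss1"
    have k: "k < length ls" using st(4) ts k_def by simp
    have tsk: "ts ! k = s0" using ts k_def by simp
    have "ls ! k \<in> set ls" using k by simp
    then have "funas_term (ls!k) \<inter> defined_syms R = {}" using lsc constructor_term_def by blast
    then have new: "argrel R (ls!k) (ss!k) t0"
      using argrel_step[OF assms(1) st(5)[rule_format, OF k]] tsk ns(1) by auto
    have "\<forall>i<length ls. argrel R (ls!i) (ss!i) ((ss1 @ t0 # ss2)!i)"
    proof (intro allI impI)
      fix i assume i: "i < length ls"
      show "argrel R (ls!i) (ss!i) ((ss1 @ t0 # ss2)!i)"
      proof (cases "i = k")
        case True then show ?thesis using new k_def by simp
      next
        case False
        have "(ss1 @ t0 # ss2)!i = ts ! i" using False ts k_def
          by (cases "i < length ss1") (auto simp: nth_append nth_Cons split: nat.splits)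
        then show ?thesis using st(5) i by simp
      qed
    qed
    then show ?case unfolding l using st ns gf ts by (auto intro!: argrel.fn)
  qed
  then have red: "\<forall>x\<in>vars_term (lhs \<rho>). (rstep R)\<^sup>*\<^sup>* (\<sigma> x) (\<tau> x)"
    using argrel_vars assms(3) t by metis
  define \<sigma>' where "\<sigma>' y = (if y \<in> vars_term (lhs \<rho>) then \<sigma> y else \<tau> y)" for y
  have s': "s = lhs \<rho> \<cdot> \<sigma>'" using assms(3) by (auto intro: subst_cong simp: \<sigma>'_def)
  have all: "(rstep R)\<^sup>*\<^sup>* (\<sigma>' y) (\<tau> y)" for y using red by (auto simp: \<sigma>'_def)
  have conds: "\<forall>(a, b) \<in> set (conds \<rho>). (rstep R)\<^sup>*\<^sup>* (a \<cdot> \<sigma>') (b \<cdot> \<sigma>')"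
  proof (intro ballI, clarify)
    fix a b assume ab: "(a, b) \<in> set (conds \<rho>)"
    then obtain i where i: "i < length (conds \<rho>)" "conds \<rho> ! i = (a, b)" by (auto simp: in_set_conv_nth)
    have "vars_term (lhs \<rho>) \<inter> vars_term b = {}" using dis i by force
    then have "b \<cdot> \<sigma>' = b \<cdot> \<tau>" by (intro subst_cong) (auto simp: \<sigma>'_def)
    moreover have "(rstep R)\<^sup>*\<^sup>* (a \<cdot> \<sigma>') (a \<cdot> \<tau>)" using all by (intro rsteps_subst) auto
    moreover have "(rstep R)\<^sup>*\<^sup>* (a \<cdot> \<tau>) (b \<cdot> \<tau>)" using cd ab by auto
    ultimately show "(rstep R)\<^sup>*\<^sup>* (a \<cdot> \<sigma>') (b \<cdot> \<sigma>')" by simp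
  qed
  have "root_step R \<rho> s (rhs \<rho> \<cdot> \<sigma>')" unfolding root_step_def using assms(2) s' conds by blast
  moreover have "(rstep R)\<^sup>*\<^sup>* (rhs \<rho> \<cdot> \<sigma>') u" unfolding u using all by (intro rsteps_subst) auto
  ultimately show ?thesis by blast
qed

end
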